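(* Let $m$ be a tour with core $K$. Then the interior of $K$ equals $\bigcap_{\theta\in\mathbb{S}^1}\mathrm{int}\big(D^+(\theta)\big)$. Moreover, $\partial K\subseteq\bigcup_{\theta\in\mathbb{S}^1}D(\theta)$.
   Context: Write $\mathbb{S}^1=\mathbb{R}/2\pi\mathbb{Z}$, $u(\theta)=(\cos\theta,\sin\theta)$ and $u^\perp(\theta)=(-\sin\theta,\cos\theta)$. A ruled function $R:\mathbb{S}^1\to\mathbb{R}$ is one having a left limit $R_l(\theta)$ and a right limit $R_r(\theta)$ at every point. A tour is a continuous map $m:\mathbb{S}^1\to\mathbb{R}^2$ such that: - $m$ has left and right derivatives at every point; - there is a ruled function $R$ with $m'_l(\theta)=R_l(\theta)u(\theta)$ and $m'_r(\theta)=R_r(\theta)u(\theta)$. For each $\theta$, $D(\theta)=m(\theta)+\mathbb{R}u(\theta)$ is the line oriented by $u(\theta)$, and $D^+(\theta)=\{x:\langle x-m(\theta),u^\perp(\theta)\rangle\ge0\}$ is its closed left half-plane. The core of the tour is $K=\bigcap_{\theta}D^+(\theta)$. *)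

theory Defs
  imports "HOL-Analysis.Analysis"
begin

text \<open>The circle S^1 = R/2piZ is modelled by 2pi-periodic functions on the reals;
  the plane R^2 is modelled by real \<times> real with its standard inner product.\<close>

definition uvec :: "real \<Rightarrow> real \<times> real" where
  "uvec \<theta> = (cos \<theta>, sin \<theta>)"

definition uperp :: "real \<Rightarrow> real \<times> real" where
  "uperp \<theta> = (- sin \<theta>, cos \<theta>)"

definition periodic2pi :: "(real \<Rightarrow> 'a) \<Rightarrow> bool" where
  "periodic2pi f \<longleftrightarrow> (\<forall>\<theta>. f (\<theta> + 2 * pi) = f \<theta>)"

definition ruled :: "(real \<Rightarrow> real) \<Rightarrow> bool" where
  "ruled R \<longleftrightarrow> periodic2pi R \<and>
     (\<forall>\<theta>. (\<exists>l. (R \<longlongrightarrow> l) (at_left \<theta>)) \<and> (\<exists>r. (R \<longlongrightarrow> r) (at_right \<theta>)))"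

definition tour :: "(real \<Rightarrow> real \<times> real) \<Rightarrow> bool" where
  "tour m \<longleftrightarrow> periodic2pi m \<and> continuous_on UNIV m \<and>
     (\<exists>R. ruled R \<and>
        (\<forall>\<theta>. (m has_vector_derivative (Lim (at_left \<theta>) R) *\<^sub>R uvec \<theta>) (at \<theta> within {..\<theta>}) \<and>
              (m has_vector_derivative (Lim (at_right \<theta>) R) *\<^sub>R uvec \<theta>) (at \<theta> within {\<theta>..})))"

definition Dline :: "(real \<Rightarrow> real \<times> real) \<Rightarrow> real \<Rightarrow> (real \<times> real) set" where
  "Dline m \<theta> = {m \<theta> + t *\<^sub>R uvec \<theta> | t. True}"

definition Dplus :: "(real \<Rightarrow> real \<times> real) \<Rightarrow> real \<Rightarrow> (real \<times> real) set" where
  "Dplus m \<theta> = {x. inner (x - m \<theta>) (uperp \<theta>) \<ge> 0}"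

definition core :: "(real \<Rightarrow> real \<times> real) \<Rightarrow> (real \<times> real) set" where
  "core m = (\<Inter>\<theta>. Dplus m \<theta>)"

end

theory Submission
  imports Defs
begin

lemma int_Dplus: "interior (Dplus m \<theta>) = {x. inner (x - m \<theta>) (uperp \<theta>) > 0}"
proof -
  have ne: "uperp \<theta> \<noteq> 0"
    by (auto simp: uperp_def zero_prod_def) (metis sin_zero_iff_int2 cos_zero_iff_int2 sin_cos_squared_add power2_eq_square mult_zero_left add.right_neutral zero_neq_one)
  have e1: "Dplus m \<theta> = {x. uperp \<theta> \<bullet> x \<ge> uperp \<theta> \<bullet> m \<theta>}"
    by (auto simp: Dplus_def inner_diff_right inner_commute)
  have e2: "{x. inner (x - m \<theta>) (uperp \<theta>) > 0} = {x. uperp \<theta> \<bullet> x > uperp \<theta> \<bullet> m \<theta>}"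
    by (auto simp: inner_diff_right inner_commute)
  show ?thesis unfolding e1 e2 using interior_halfspace_ge[OF ne] by simp
qed

lemma periodic_nat:
  assumes "periodic2pi f" shows "f (t + real n * (2*pi)) = f t"
proof (induction n)
  case 0 then show ?case by simp
next
  case (Suc n)
  have "f (t + real (Suc n) * (2*pi)) = f ((t + real n * (2*pi)) + 2*pi)"
    by (simp add: algebra_simps)
  also have "\<dots> = f t" using assms Suc by (simp add: periodic2pi_def)
  finally show ?case .
qed

lemma periodic_reduce:
  assumes "periodic2pi f" shows "\<exists>s\<in>{0..2*pi}. f t = f s"
proof -
  define k where "k = \<lfloor>t / (2*pi)\<rfloor>"
  define s where "s = t - real_of_int k * (2*pi)"
  have "real_of_int k \<le> t/(2*pi)" "t/(2*pi) < real_of_int k + 1"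
    unfolding k_def by linarith+
  hence "real_of_int k * (2*pi) \<le> t" "t < (real_of_int k + 1) * (2*pi)"
    using pi_gt_zero by (simp_all add: field_simps)
  hence s: "s \<in> {0..2*pi}" unfolding s_def by (auto simp: algebra_simps)
  have "f t = f s"
  proof (cases "k \<ge> 0")
    case True
    have "t = s + real (nat k) * (2*pi)" using True by (simp add: s_def)
    then show ?thesis using periodic_nat[OF assms] by metis
  next
    case False
    have "s = t + real (nat (-k)) * (2*pi)" using False by (simp add: s_def)
    then show ?thesis using periodic_nat[OF assms] by metis
  qed
  with s show ?thesis by blast
qed

lemma norm_uperp: "norm (uperp \<theta>) = 1"
  by (simp add: uperp_def norm_Pair)

theorem mainTheorem2:
  assumes "tour m"
  shows "interior (core m) = (\<Inter>\<theta>. interior (Dplus m \<theta>))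
         \<and> frontier (core m) \<subseteq> (\<Union>\<theta>. Dline m \<theta>)"
proof -
  have per: "periodic2pi m" and cont: "continuous_on UNIV m" using assms by (auto simp: tour_def)
  have I: "interior (core m) = (\<Inter>\<theta>. interior (Dplus m \<theta>))"
  proof
    show "interior (core m) \<subseteq> (\<Inter>\<theta>. interior (Dplus m \<theta>))"
      unfolding core_def by (auto intro: interior_mono[THEN subsetD, rotated])
  next
    show "(\<Inter>\<theta>. interior (Dplus m \<theta>)) \<subseteq> interior (core m)"
    proof
      fix x assume "x \<in> (\<Inter>\<theta>. interior (Dplus m \<theta>))"
      hence pos: "\<And>\<theta>. inner (x - m \<theta>) (uperp \<theta>) > 0" by (auto simp: int_Dplus)
      define f where "f \<theta> = inner (x - m \<theta>) (uperp \<theta>)" for \<theta>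
      have cf: "continuous_on {0..2*pi} f" unfolding f_def uperp_def
        by (intro continuous_intros continuous_on_subset[OF cont]) auto
      obtain \<theta>0 where "\<theta>0 \<in> {0..2*pi}" and mn: "\<And>y. y \<in> {0..2*pi} \<Longrightarrow> f \<theta>0 \<le> f y"
        using continuous_attains_inf[OF compact_Icc _ cf] pi_gt_zero by auto
      have pf: "periodic2pi f" using per
        by (simp add: periodic2pi_def f_def uperp_def)
      have fmin: "\<And>t. f \<theta>0 \<le> f t"
        using periodic_reduce[OF pf] mn by metis
      define d where "d = f \<theta>0"
      have dpos: "d > 0" using pos by (simp add: d_def f_def)
      have "ball x d \<subseteq> core m"
      proof
        fix y assume "y \<in> ball x d"
        hence ny: "norm (y - x) < d" by (simp add: dist_norm norm_minus_commute)
        show "y \<in> core m" unfolding core_def Dplus_def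
        proof (clarify)
          fix \<theta>
          have "\<bar>inner (y - x) (uperp \<theta>)\<bar> \<le> norm (y - x) * norm (uperp \<theta>)"
            by (rule Cauchy_Schwarz_ineq2)
          hence a: "\<bar>inner (y - x) (uperp \<theta>)\<bar> < d" using ny by (simp add: norm_uperp)
          have "inner (y - m \<theta>) (uperp \<theta>) = f \<theta> + inner (y - x) (uperp \<theta>)"
            by (simp add: f_def inner_diff_left)
          moreover have "d \<le> f \<theta>" using fmin d_def by simp
          ultimately show "0 \<le> inner (y - m \<theta>) (uperp \<theta>)" using a by linarith
        qed
      qed
      then show "x \<in> interior (core m)" using dpos
        by (meson centre_in_ball interior_maximal open_ball subsetD)
    qed
  qed
  have cl: "closed (core m)" unfolding core_def Dplus_def
    by (intro closed_INT ballI closed_Collect_le continuous_intros) 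
  have F: "frontier (core m) \<subseteq> (\<Union>\<theta>. Dline m \<theta>)"
  proof
    fix x assume xf: "x \<in> frontier (core m)"
    hence xK: "x \<in> core m" using cl by (simp add: frontier_def)
    have "x \<notin> interior (core m)" using xf by (simp add: frontier_def)
    then obtain \<theta> where "x \<notin> interior (Dplus m \<theta>)" using I by auto
    hence le: "inner (x - m \<theta>) (uperp \<theta>) \<le> 0" by (simp add: int_Dplus)
    have ge: "inner (x - m \<theta>) (uperp \<theta>) \<ge> 0" using xK by (auto simp: core_def Dplus_def)
    obtain a b where ab: "x - m \<theta> = (a, b)" by (cases "x - m \<theta>")
    have z: "- a * sin \<theta> + b * cos \<theta> = 0" using le ge ab by (simp add: uperp_def)
    define t where "t = a * cos \<theta> + b * sin \<theta>"
    have zz: "b * cos \<theta> = a * sin \<theta>" using z by simp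
    have "a = t * cos \<theta>"
    proof -
      have "t * cos \<theta> = a * (cos \<theta> * cos \<theta>) + (b * cos \<theta>) * sin \<theta>" by (simp add: t_def algebra_simps)
      also have "\<dots> = a * (cos \<theta> * cos \<theta> + sin \<theta> * sin \<theta>)" by (simp only: zz mult.assoc distrib_left)
      also have "\<dots> = a" by (simp add: sin_cos_squared_add3)
      finally show ?thesis by simp
    qed
    moreover have "b = t * sin \<theta>"
    proof -
      have "t * sin \<theta> = (a * sin \<theta>) * cos \<theta> + b * (sin \<theta> * sin \<theta>)" by (simp add: t_def algebra_simps)
      also have "\<dots> = b * (cos \<theta> * cos \<theta> + sin \<theta> * sin \<theta>)" by (simp only: zz[symmetric] mult.assoc distrib_left)
      also have "\<dots> = b" by (simp add: sin_cos_squared_add3)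
      finally show ?thesis by simp
    qed
    ultimately have "x = m \<theta> + t *\<^sub>R uvec \<theta>" using ab
      by (simp add: uvec_def) (metis add_diff_cancel_left' diff_add_cancel add.commute)
    thus "x \<in> (\<Union>\<theta>. Dline m \<theta>)" unfolding Dline_def by blast
  qed
  show ?thesis using I F by blast
qed

end
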